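(* Let $X$ be a continuous real-valued random variable and fix an integer $K \ge 1$. For each $n > K$, let $Z = Z_n$ be the random variable produced by the SMOTE-$K$ procedure (described in the context) from an i.i.d. sample $X_1, \dots, X_n$ drawn from $X$. Then $Z$ converges to $X$ in probability as $n \to \infty$.
   Context: SMOTE-$K$ procedure: given a sample $X_1,\dots,X_n$ of real numbers and a rank $1 \le K \le n-1$: (1) choose an index $i$ uniformly at random from $\{1,\dots,n\}$; (2) find the $K$ nearest neighbors $X_{i,(1)}, \dots, X_{i,(K)}$ of $X_i$ among the other sample points $\{X_j: j\ne i\}$, where $X_{i,(k)}$ realizes the $k$-th smallest of the distances $|X_j - X_i|$, $j\neq i$; (3) choose one of them, $X_{i,(k)}$, uniformly at random; (4) draw $\lambda \sim U(0,1)$ independently; (5) output $Z = X_i + \lambda (X_{i,(k)} - X_i)$. The random variable $X$ appearing in the conclusion is taken to be the sample point $X_i$ from which $Z$ is generated (which has the distribution of $X$), so the convergence means $P(|Z - X_i| > \varepsilon) \to 0$ for every $\varepsilon > 0$. *)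

theory Defs
  imports "HOL-Probability.Probability"
begin

text \<open>Ties (a null event for atomless distributions)
  are broken by smaller index, since sort_key is a stable sort.\<close>
definition nn_index :: "(nat \<Rightarrow> real) \<Rightarrow> nat \<Rightarrow> nat \<Rightarrow> nat \<Rightarrow> nat" where
  "nn_index x n i k = sort_key (\<lambda>j. \<bar>x j - x i\<bar>) (filter (\<lambda>j. j \<noteq> i) [0..<n]) ! (k - 1)"

definition smote_point :: "(nat \<Rightarrow> real) \<Rightarrow> nat \<Rightarrow> nat \<Rightarrow> nat \<Rightarrow> real \<Rightarrow> real" where
  "smote_point x n i k l = x i + l * (x (nn_index x n i k) - x i)"

definition smote_space :: "real measure \<Rightarrow> nat \<Rightarrow> nat \<Rightarrow> ((nat \<Rightarrow> real) \<times> nat \<times> nat \<times> real) measure" where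
  "smote_space \<mu> n K =
     (PiM {..<n} (\<lambda>_. \<mu>)) \<Otimes>\<^sub>M
       ((measure_pmf (pmf_of_set {..<n})) \<Otimes>\<^sub>M
         ((measure_pmf (pmf_of_set {1..K})) \<Otimes>\<^sub>M uniform_measure lborel {0<..<1::real}))"

end

theory Submission
  imports Defs
begin

lemma measure_Times_prob:
  assumes "prob_space M1" "prob_space M2" "A \<in> sets M1" "B \<in> sets M2"
  shows "measure (M1 \<Otimes>\<^sub>M M2) (A \<times> B) = measure M1 A * measure M2 B"
proof -
  interpret M2: prob_space M2 by fact
  have "emeasure (M1 \<Otimes>\<^sub>M M2) (A \<times> B) = emeasure M1 A * emeasure M2 B"
    by (rule M2.emeasure_pair_measure_Times) (use assms in auto)
  thus ?thesis by (simp add: measure_def enn2real_mult)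
qed

lemma floor_close:
  fixes a b e :: real
  assumes "e > 0" "\<lfloor>a / e\<rfloor> = \<lfloor>b / e\<rfloor>"
  shows "\<bar>a - b\<bar> < e"
proof -
  have 1: "real_of_int \<lfloor>a / e\<rfloor> \<le> a / e" "a / e < real_of_int \<lfloor>a / e\<rfloor> + 1"
    by (rule of_int_floor_le, rule real_of_int_floor_add_one_gt)
  have 2: "real_of_int \<lfloor>b / e\<rfloor> \<le> b / e" "b / e < real_of_int \<lfloor>b / e\<rfloor> + 1"
    by (rule of_int_floor_le, rule real_of_int_floor_add_one_gt)
  have "a / e - b / e < 1" "b / e - a / e < 1" using 1 2 assms(2) by linarith+
  hence "(a - b) / e < 1" "(b - a) / e < 1" by (simp_all only: diff_divide_distrib)
  hence "a - b < e" "b - a < e" using assms(1) by (simp_all add: divide_less_eq)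
  thus ?thesis by linarith
qed

lemma count_bad:
  fixes x :: "nat \<Rightarrow> real" and e M :: real
  assumes "e > 0"
  shows "card {i\<in>{..<n}. \<bar>x i\<bar> \<le> M \<and> card {j\<in>{..<n}. \<lfloor>x j / e\<rfloor> = \<lfloor>x i / e\<rfloor>} \<le> K}
         \<le> K * card {\<lfloor>-M/e\<rfloor>..\<lfloor>M/e\<rfloor>}"
proof -
  define C where "C = {\<lfloor>-M/e\<rfloor>..\<lfloor>M/e\<rfloor>}"
  define A where "A c = {i\<in>{..<n}. \<lfloor>x i / e\<rfloor> = c \<and> card {j\<in>{..<n}. \<lfloor>x j / e\<rfloor> = c} \<le> K}" for c
  have sub: "{i\<in>{..<n}. \<bar>x i\<bar> \<le> M \<and> card {j\<in>{..<n}. \<lfloor>x j / e\<rfloor> = \<lfloor>x i / e\<rfloor>} \<le> K}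
        \<subseteq> (\<Union>c\<in>C. A c)"
  proof
    fix i assume "i \<in> {i\<in>{..<n}. \<bar>x i\<bar> \<le> M \<and> card {j\<in>{..<n}. \<lfloor>x j / e\<rfloor> = \<lfloor>x i / e\<rfloor>} \<le> K}"
    hence i: "i < n" "\<bar>x i\<bar> \<le> M" "card {j\<in>{..<n}. \<lfloor>x j / e\<rfloor> = \<lfloor>x i / e\<rfloor>} \<le> K" by auto
    have "-M / e \<le> x i / e" using i(2) assms by (intro divide_right_mono) auto
    moreover have "x i / e \<le> M / e" using i(2) assms by (intro divide_right_mono) auto
    ultimately have "\<lfloor>x i / e\<rfloor> \<in> C" unfolding C_def by (auto intro: floor_mono)
    thus "i \<in> (\<Union>c\<in>C. A c)" using i unfolding A_def by auto
  qed
  have cA: "card (A c) \<le> K" for c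
  proof (cases "card {j\<in>{..<n}. \<lfloor>x j / e\<rfloor> = c} \<le> K")
    case True
    have "A c \<subseteq> {j\<in>{..<n}. \<lfloor>x j / e\<rfloor> = c}" unfolding A_def by auto
    hence "card (A c) \<le> card {j\<in>{..<n}. \<lfloor>x j / e\<rfloor> = c}" by (intro card_mono) auto
    thus ?thesis using True by linarith
  next
    case False
    hence "A c = {}" unfolding A_def by auto
    thus ?thesis by simp
  qed
  have "card {i\<in>{..<n}. \<bar>x i\<bar> \<le> M \<and> card {j\<in>{..<n}. \<lfloor>x j / e\<rfloor> = \<lfloor>x i / e\<rfloor>} \<le> K}
        \<le> card (\<Union>c\<in>C. A c)"
    by (rule card_mono[OF _ sub]) (auto simp: A_def C_def)
  also have "\<dots> \<le> (\<Sum>c\<in>C. card (A c))" by (rule card_UN_le) (simp add: C_def)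
  also have "\<dots> \<le> (\<Sum>c\<in>C. K)" by (intro sum_mono cA)
  also have "\<dots> = K * card C" by simp
  finally show ?thesis unfolding C_def .
qed

lemma pred_card:
  fixes \<epsilon> :: real and n :: nat
  assumes [measurable]: "i \<in> {..<n}"
  shows "Measurable.pred (PiM {..<n} (\<lambda>_. borel)) (\<lambda>x. real (card {j\<in>{..<n}. \<lfloor>x j / \<epsilon>\<rfloor> = \<lfloor>x i / \<epsilon>\<rfloor>}) \<le> real K)"
proof -
  have eq: "real (card {j\<in>{..<n}. \<lfloor>x j / \<epsilon>\<rfloor> = \<lfloor>x i / \<epsilon>\<rfloor>}) = (\<Sum>j<n. if \<lfloor>x j / \<epsilon>\<rfloor> = \<lfloor>x i / \<epsilon>\<rfloor> then 1 else 0)" for x :: "nat \<Rightarrow> real"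
    by (simp add: sum.If_cases Int_def)
  have [measurable]: "(\<lambda>x. \<lfloor>x j / \<epsilon>\<rfloor>) \<in> measurable (PiM {..<n} (\<lambda>_. borel)) (count_space UNIV)" if [measurable]: "j \<in> {..<n}" for j
    by measurable
  have [measurable]: "(\<lambda>x. \<Sum>j<n. if \<lfloor>x j / \<epsilon>\<rfloor> = \<lfloor>x i / \<epsilon>\<rfloor> then 1 else 0::real) \<in> borel_measurable (PiM {..<n} (\<lambda>_. borel))"
    by (intro borel_measurable_sum measurable_If) (auto intro!: pred_intros_logic)
  show ?thesis unfolding eq
    by measurable
qed


lemma nn_close:
  fixes x :: "nat \<Rightarrow> real"
  assumes "1 \<le> k" "k \<le> K" "K \<le> card {j\<in>{..<n}. j \<noteq> i \<and> \<bar>x j - x i\<bar> \<le> \<epsilon>}"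
  shows "\<bar>x (nn_index x n i k) - x i\<bar> \<le> \<epsilon>"
proof (rule ccontr)
  define f where "f = (\<lambda>j. \<bar>x j - x i\<bar>)"
  define ys where "ys = sort_key f (filter (\<lambda>j. j \<noteq> i) [0..<n])"
  define P where "P = (\<lambda>j. f j \<le> \<epsilon>)"
  assume "\<not> ?thesis"
  hence gt: "f (ys ! (k-1)) > \<epsilon>" unfolding f_def ys_def nn_index_def by simp
  have dys: "distinct ys" unfolding ys_def by simp
  have sys: "set ys = {j\<in>{..<n}. j \<noteq> i}" unfolding ys_def by auto
  have srt: "sorted (map f ys)" unfolding ys_def by simp
  have S: "{j\<in>{..<n}. j \<noteq> i \<and> \<bar>x j - x i\<bar> \<le> \<epsilon>} = set (filter P ys)"
    using sys unfolding P_def f_def by auto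
  have cS: "card (set (filter P ys)) = length (filter P ys)"
    using distinct_card[OF distinct_filter[OF dys, of P]] by simp
  have KL: "K \<le> length (filter P ys)" using assms(3) S cS by simp
  have "length (filter P ys) \<le> length ys" by simp
  hence len: "k - 1 < length ys" using assms KL by linarith
  have drop: "filter P (drop (k-1) ys) = []"
  proof -
    have "\<not> P y" if yin: "y \<in> set (drop (k-1) ys)" for y
    proof -
      obtain p where p: "p < length (drop (k-1) ys)" "y = drop (k-1) ys ! p"
        using yin unfolding in_set_conv_nth by blast
      have "y = ys ! (k - 1 + p)" using p len by simp
      moreover have "f (ys ! (k-1)) \<le> f (ys ! (k - 1 + p))"
        using srt p len sorted_nth_mono[OF srt, of "k-1" "k-1+p"] by simp
      ultimately show ?thesis using gt unfolding P_def by simp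
    qed
    thus ?thesis by (simp add: filter_empty_conv)
  qed
  have "filter P ys = filter P (take (k-1) ys @ drop (k-1) ys)" by simp
  also have "\<dots> = filter P (take (k-1) ys) @ filter P (drop (k-1) ys)" by (rule filter_append)
  finally have "length (filter P ys) = length (filter P (take (k-1) ys))" using drop by simp
  also have "\<dots> \<le> length (take (k-1) ys)" by (rule length_filter_le)
  also have "\<dots> \<le> k - 1" by simp
  finally have "length (filter P ys) \<le> k - 1" .
  thus False using assms KL by linarith
qed

lemma main_bound:
  fixes \<mu> :: "real measure" and K n :: nat and \<epsilon> M :: real
  assumes mu: "prob_space \<mu>" and smu: "sets \<mu> = sets borel" and K: "K \<ge> 1" and eps: "\<epsilon> > 0" and n: "n \<ge> 1"
  shows "measure (smote_space \<mu> n K)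
            {(x, i, k, l) \<in> space (smote_space \<mu> n K).
               \<bar>smote_point x n i k l - x i\<bar> > \<epsilon>}
         \<le> measure \<mu> {t. M < \<bar>t\<bar>} + real K * real (card {\<lfloor>-M/\<epsilon>\<rfloor>..\<lfloor>M/\<epsilon>\<rfloor>}) / real n"
proof -
  define P where "P = PiM {..<n} (\<lambda>_. \<mu>)"
  define Q where "Q = measure_pmf (pmf_of_set {..<n})"
  define U where "U = uniform_measure lborel {0<..<1::real}"
  define R where "R = measure_pmf (pmf_of_set {1..K}) \<Otimes>\<^sub>M U"
  define S where "S = P \<Otimes>\<^sub>M (Q \<Otimes>\<^sub>M R)"
  have S_eq: "smote_space \<mu> n K = S" unfolding S_def P_def Q_def R_def U_def smote_space_def by simp
  have pP: "prob_space P" unfolding P_def by (intro prob_space_PiM mu)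
  have pQ: "prob_space Q" unfolding Q_def by (rule measure_pmf.prob_space_axioms)
  have pK: "prob_space (measure_pmf (pmf_of_set {1..K::nat}))" by (rule measure_pmf.prob_space_axioms)
  have pU: "prob_space U" unfolding U_def by (intro prob_space_uniform_measure) auto
  have pR: "prob_space R" unfolding R_def by (intro prob_space_pair pK pU)
  have pQR: "prob_space (Q \<Otimes>\<^sub>M R)" by (intro prob_space_pair pQ pR)
  have pS: "prob_space S" unfolding S_def by (intro prob_space_pair pP pQR)
  interpret S: prob_space S by (rule pS)
  interpret P: prob_space P by (rule pP)
  have spQ: "space Q = UNIV" unfolding Q_def by simp
  have spU: "space U = UNIV" unfolding U_def by simp
  have spR: "space R = UNIV" unfolding R_def by (simp add: space_pair_measure spU)
  have spS: "space S = space P \<times> UNIV" unfolding S_def by (simp add: space_pair_measure spQ spR)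
  have setsP: "sets P = sets (PiM {..<n} (\<lambda>_. borel))" unfolding P_def
    by (intro sets_PiM_cong) (auto simp: smu)
  have spP: "space P = space (PiM {..<n} (\<lambda>_. borel))" by (rule sets_eq_imp_space_eq[OF setsP])
  define bad where "bad x i \<longleftrightarrow> M < \<bar>x i\<bar> \<or> real (card {j\<in>{..<n}. \<lfloor>x j / \<epsilon>\<rfloor> = \<lfloor>x i / \<epsilon>\<rfloor>}) \<le> real K" for x :: "nat \<Rightarrow> real" and i
  define Bx where "Bx i = {x \<in> space P. bad x i}" for i
  have Bx_sets: "Bx i \<in> sets P" if "i < n" for i
  proof -
    have [measurable]: "i \<in> {..<n}" using that by simp
    note pred_card[of i n \<epsilon> K, measurable]
    show ?thesis unfolding Bx_def bad_def spP setsP by measurable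
  qed
  define Cx where "Cx i = {x \<in> space P. \<bar>x i\<bar> \<le> M \<and> real (card {j\<in>{..<n}. \<lfloor>x j / \<epsilon>\<rfloor> = \<lfloor>x i / \<epsilon>\<rfloor>}) \<le> real K}" for i
  have Cx_sets: "Cx i \<in> sets P" if "i < n" for i
  proof -
    have [measurable]: "i \<in> {..<n}" using that by simp
    note pred_card[of i n \<epsilon> K, measurable]
    show ?thesis unfolding Cx_def spP setsP by measurable
  qed
  define Ox where "Ox i = {x \<in> space P. M < \<bar>x i\<bar>}" for i
  have Ox_sets: "Ox i \<in> sets P" if "i < n" for i
  proof -
    have [measurable]: "i \<in> {..<n}" using that by simp
    show ?thesis unfolding Ox_def spP setsP by measurable
  qed
  define N1 where "N1 = space P \<times> ((- {..<n}) \<times> space R)"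
  define N2 where "N2 = space P \<times> (space Q \<times> ((- {1..K}) \<times> space U))"
  define N3 where "N3 = space P \<times> (space Q \<times> ((UNIV::nat set) \<times> (- {0<..<1::real})))"
  define B where "B = (\<Union>i<n. Bx i \<times> ({i} \<times> space R))"
  define E where "E = {(x, i, k, l) \<in> space (smote_space \<mu> n K). \<bar>smote_point x n i k l - x i\<bar> > \<epsilon>}"
  have sub: "E \<subseteq> ((N1 \<union> N2) \<union> N3) \<union> B"
  proof
    fix z assume "z \<in> E"
    then obtain x i k l where z: "z = (x, i, k, l)" and xP: "x \<in> space P"
      and gt: "\<bar>smote_point x n i k l - x i\<bar> > \<epsilon>"
      unfolding E_def S_eq spS by auto
    show "z \<in> ((N1 \<union> N2) \<union> N3) \<union> B"
    proof (cases "i < n \<and> k \<in> {1..K} \<and> l \<in> {0<..<1}")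
      case False
      thus ?thesis unfolding z N1_def N2_def N3_def using xP by (auto simp: spQ spR spU)
    next
      case True
      hence i: "i < n" and k: "1 \<le> k" "k \<le> K" and l: "0 < l" "l < 1" by auto
      show ?thesis
      proof (cases "bad x i")
        case True
        thus ?thesis unfolding z B_def Bx_def using xP i by (auto simp: spR)
      next
        case False
        define T where "T = {j\<in>{..<n}. \<lfloor>x j / \<epsilon>\<rfloor> = \<lfloor>x i / \<epsilon>\<rfloor>}"
        have cT: "K < card T" using False unfolding bad_def T_def by simp
        have iT: "i \<in> T" unfolding T_def using i by simp
        have "T - {i} \<subseteq> {j\<in>{..<n}. j \<noteq> i \<and> \<bar>x j - x i\<bar> \<le> \<epsilon>}"
          unfolding T_def using floor_close[OF eps] by (auto intro: less_imp_le)
        hence "card (T - {i}) \<le> card {j\<in>{..<n}. j \<noteq> i \<and> \<bar>x j - x i\<bar> \<le> \<epsilon>}"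
          by (intro card_mono) auto
        moreover have "card (T - {i}) = card T - 1" using iT by (simp add: T_def)
        ultimately have "K \<le> card {j\<in>{..<n}. j \<noteq> i \<and> \<bar>x j - x i\<bar> \<le> \<epsilon>}" using cT by linarith
        hence d: "\<bar>x (nn_index x n i k) - x i\<bar> \<le> \<epsilon>" by (rule nn_close[OF k(1) k(2)])
        have "\<bar>smote_point x n i k l - x i\<bar> = l * \<bar>x (nn_index x n i k) - x i\<bar>"
          unfolding smote_point_def using l by (simp add: abs_mult)
        also have "\<dots> \<le> \<bar>x (nn_index x n i k) - x i\<bar>"
          using l mult_right_mono[of l 1 "\<bar>x (nn_index x n i k) - x i\<bar>"] by simp
        finally show ?thesis using d gt by linarith
      qed
    qed
  qed
  have Us: "- {0<..<1::real} \<in> sets U" unfolding U_def by simp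
  have N1s: "N1 \<in> sets S" unfolding N1_def S_def by (intro pair_measureI) (auto simp: Q_def)
  have N2s: "N2 \<in> sets S" unfolding N2_def S_def R_def by (intro pair_measureI) auto
  have N3s: "N3 \<in> sets S" unfolding N3_def S_def R_def using Us by (intro pair_measureI) auto
  have mN1: "measure S N1 = 0"
  proof -
    have "measure S N1 = measure P (space P) * measure (Q \<Otimes>\<^sub>M R) ((- {..<n}) \<times> space R)"
      unfolding N1_def S_def by (rule measure_Times_prob[OF pP pQR]) (auto simp: Q_def)
    also have "\<dots> = measure P (space P) * (measure Q (- {..<n}) * measure R (space R))"
      by (subst measure_Times_prob[OF pQ pR]) (auto simp: Q_def)
    also have "measure Q (- {..<n}) = 0" unfolding Q_def using n by (subst measure_pmf_of_set) (auto simp: lessThan_empty_iff)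
    finally show ?thesis by simp
  qed
  have mN2: "measure S N2 = 0"
  proof -
    have "measure S N2 = measure P (space P) * measure (Q \<Otimes>\<^sub>M R) (space Q \<times> ((- {1..K}) \<times> space U))"
      unfolding N2_def S_def by (rule measure_Times_prob[OF pP pQR]) (auto simp: R_def)
    also have "\<dots> = measure P (space P) * (measure Q (space Q) * measure R ((- {1..K}) \<times> space U))"
      by (subst measure_Times_prob[OF pQ pR]) (auto simp: R_def)
    also have "measure R ((- {1..K}) \<times> space U) = measure (measure_pmf (pmf_of_set {1..K})) (- {1..K}) * measure U (space U)"
      unfolding R_def by (rule measure_Times_prob[OF pK pU]) auto
    also have "measure (measure_pmf (pmf_of_set {1..K})) (- {1..K}) = 0"
      using K by (subst measure_pmf_of_set) auto
    finally show ?thesis by simp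
  qed
  have mU: "measure U (- {0<..<1::real}) = 0" unfolding U_def measure_def by simp
  have mN3: "measure S N3 = 0"
  proof -
    have "measure S N3 = measure P (space P) * measure (Q \<Otimes>\<^sub>M R) (space Q \<times> ((UNIV::nat set) \<times> (- {0<..<1::real})))"
      unfolding N3_def S_def using Us by (intro measure_Times_prob[OF pP pQR]) (auto simp: R_def)
    also have "\<dots> = measure P (space P) * (measure Q (space Q) * measure R ((UNIV::nat set) \<times> (- {0<..<1::real})))"
      using Us by (subst measure_Times_prob[OF pQ pR]) (auto simp: R_def)
    also have "measure R ((UNIV::nat set) \<times> (- {0<..<1::real})) = measure (measure_pmf (pmf_of_set {1..K})) UNIV * measure U (- {0<..<1::real})"
      unfolding R_def using Us by (intro measure_Times_prob[OF pK pU]) auto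
    finally show ?thesis using mU by simp
  qed
  have Bis: "Bx i \<times> ({i} \<times> space R) \<in> sets S" if "i < n" for i
    unfolding S_def using Bx_sets[OF that] by (intro pair_measureI) (auto simp: Q_def)
  have Bs: "B \<in> sets S" unfolding B_def using Bis by auto
  have mBi: "measure S (Bx i \<times> ({i} \<times> space R)) = measure P (Bx i) / real n" if "i < n" for i
  proof -
    have "measure S (Bx i \<times> ({i} \<times> space R)) = measure P (Bx i) * measure (Q \<Otimes>\<^sub>M R) ({i} \<times> space R)"
      unfolding S_def using Bx_sets[OF that] by (intro measure_Times_prob[OF pP pQR]) (auto simp: Q_def)
    also have "measure (Q \<Otimes>\<^sub>M R) ({i} \<times> space R) = measure Q {i} * measure R (space R)"
      by (intro measure_Times_prob[OF pQ pR]) (auto simp: Q_def)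
    also have "measure Q {i} = 1 / real n" unfolding Q_def using that
      by (subst measure_pmf_of_set) (auto simp: lessThan_empty_iff)
    finally show ?thesis by (simp add: prob_space.prob_space[OF pR])
  qed
  have mB: "measure S B = (\<Sum>i<n. measure P (Bx i) / real n)"
    unfolding B_def
    by (subst measure_finite_Union) (use Bis mBi in \<open>auto simp: disjoint_family_on_def S.emeasure_finite\<close>)
  interpret PP: product_prob_space "\<lambda>_. \<mu>" "{..<n}"
    by (simp add: product_prob_space_def product_prob_space_axioms_def product_sigma_finite_def
        prob_space_imp_sigma_finite mu)
  have mO: "measure P (Ox i) = measure \<mu> {t. M < \<bar>t\<bar>}" if "i < n" for i
  proof -
    have A: "{t::real. M < \<bar>t\<bar>} \<in> sets \<mu>" unfolding smu by measurable
    have "emeasure P (Ox i) = emeasure \<mu> {t. M < \<bar>t\<bar>}"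
      unfolding Ox_def P_def using PP.emeasure_PiM_Collect_single[of i "{t. M < \<bar>t\<bar>}"] that A by simp
    thus ?thesis by (simp add: measure_def)
  qed
  have mBx: "measure P (Bx i) \<le> measure \<mu> {t. M < \<bar>t\<bar>} + measure P (Cx i)" if "i < n" for i
  proof -
    have "Bx i = Ox i \<union> Cx i" unfolding Bx_def Ox_def Cx_def bad_def by auto
    hence "measure P (Bx i) \<le> measure P (Ox i) + measure P (Cx i)"
      using measure_Un_le[OF Ox_sets[OF that] Cx_sets[OF that]] by simp
    thus ?thesis using mO[OF that] by simp
  qed
  define C where "C = {\<lfloor>-M/\<epsilon>\<rfloor>..\<lfloor>M/\<epsilon>\<rfloor>}"
  have sumC: "(\<Sum>i<n. measure P (Cx i)) \<le> real K * real (card C)"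
  proof -
    have intC: "integrable P (indicator (Cx i) :: _ \<Rightarrow> real)" if "i \<in> {..<n}" for i
      using Cx_sets that by (auto simp: integrable_indicator_iff Int_absorb2 sets.sets_into_space P.emeasure_finite less_top[symmetric])
    have "(\<Sum>i<n. measure P (Cx i)) = (\<Sum>i<n. integral\<^sup>L P (indicator (Cx i)))"
      using Cx_sets by (intro sum.cong) (auto simp: Int_absorb2 sets.sets_into_space)
    also have "\<dots> = integral\<^sup>L P (\<lambda>x. \<Sum>i<n. indicator (Cx i) x)"
      using Bochner_Integration.integral_sum[where I="{..<n}" and M=P and f="\<lambda>i. indicator (Cx i) :: _ \<Rightarrow> real", OF intC] by simp
    also have "\<dots> \<le> integral\<^sup>L P (\<lambda>x. real K * real (card C))"
    proof (rule integral_mono)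
      show "integrable P (\<lambda>x. \<Sum>i<n. indicator (Cx i) x :: real)" by (intro Bochner_Integration.integrable_sum intC)
      show "integrable P (\<lambda>x. real K * real (card C))" by simp
      fix x assume xP: "x \<in> space P"
      have "(\<Sum>i<n. indicator (Cx i) x :: real) = real (card {i\<in>{..<n}. x \<in> Cx i})"
        by (simp add: indicator_def sum.If_cases Int_def)
      also have "{i\<in>{..<n}. x \<in> Cx i} = {i\<in>{..<n}. \<bar>x i\<bar> \<le> M \<and> card {j\<in>{..<n}. \<lfloor>x j / \<epsilon>\<rfloor> = \<lfloor>x i / \<epsilon>\<rfloor>} \<le> K}"
        unfolding Cx_def using xP by auto
      also have "real (card \<dots>) \<le> real (K * card C)"
        unfolding C_def by (rule of_nat_mono, rule count_bad[OF eps])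
      finally show "(\<Sum>i<n. indicator (Cx i) x) \<le> real K * real (card C)" by simp
    qed
    also have "\<dots> = real K * real (card C)" by (simp add: P.prob_space)
    finally show ?thesis .
  qed
  have h1: "measure S E \<le> measure S (((N1 \<union> N2) \<union> N3) \<union> B)"
    by (rule S.finite_measure_mono[OF sub]) (use N1s N2s N3s Bs in auto)
  have h2: "measure S (((N1 \<union> N2) \<union> N3) \<union> B) \<le> measure S ((N1 \<union> N2) \<union> N3) + measure S B"
    by (rule measure_Un_le) (use N1s N2s N3s Bs in auto)
  have h3: "measure S ((N1 \<union> N2) \<union> N3) \<le> measure S (N1 \<union> N2) + measure S N3"
    by (rule measure_Un_le) (use N1s N2s N3s in auto)
  have h4: "measure S (N1 \<union> N2) \<le> measure S N1 + measure S N2"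
    by (rule measure_Un_le) (use N1s N2s in auto)
  have h5: "measure S B \<le> (\<Sum>i<n. (measure \<mu> {t. M < \<bar>t\<bar>} + measure P (Cx i)) / real n)"
    unfolding mB by (intro sum_mono divide_right_mono mBx) auto
  have h6: "(\<Sum>i<n. (measure \<mu> {t. M < \<bar>t\<bar>} + measure P (Cx i)) / real n) = measure \<mu> {t. M < \<bar>t\<bar>} + (\<Sum>i<n. measure P (Cx i)) / real n"
    using n by (simp add: sum_divide_distrib[symmetric] sum.distrib add_divide_distrib)
  have h7: "(\<Sum>i<n. measure P (Cx i)) / real n \<le> real K * real (card C) / real n"
    using sumC n by (simp add: divide_right_mono)
  have "measure S E \<le> measure \<mu> {t. M < \<bar>t\<bar>} + real K * real (card C) / real n"
    using h1 h2 h3 h4 h5 h6 h7 mN1 mN2 mN3 by linarith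
  thus ?thesis unfolding E_def C_def S_eq .
qed

lemma tight:
  fixes \<mu> :: "real measure"
  assumes mu: "prob_space \<mu>" and smu: "sets \<mu> = sets borel" and d: "\<delta> > 0"
  shows "\<exists>M. measure \<mu> {t. M < \<bar>t\<bar>} < \<delta>"
proof -
  interpret prob_space \<mu> by (rule mu)
  define A where "A m = {t::real. real m < \<bar>t\<bar>}" for m :: nat
  have "range A \<subseteq> sets \<mu>" unfolding A_def smu by auto
  moreover have "decseq A" unfolding A_def decseq_def by auto
  ultimately have "(\<lambda>m. measure \<mu> (A m)) \<longlonglongrightarrow> measure \<mu> (\<Inter>m. A m)"
    by (rule finite_Lim_measure_decseq)
  moreover have "(\<Inter>m. A m) = {}"
  proof -
    have "t \<notin> (\<Inter>m. A m)" for t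
    proof -
      obtain m :: nat where "\<bar>t\<bar> \<le> real m" using real_arch_simple by blast
      thus ?thesis unfolding A_def by (auto intro!: exI[of _ m])
    qed
    thus ?thesis by auto
  qed
  ultimately have "(\<lambda>m. measure \<mu> (A m)) \<longlonglongrightarrow> 0" by simp
  then obtain m where "norm (measure \<mu> (A m) - 0) < \<delta>" using d LIMSEQ_D by blast
  hence "measure \<mu> (A m) < \<delta>" by simp
  thus ?thesis unfolding A_def by blast
qed

theorem corollary2:
  fixes \<mu> :: "real measure" and K :: nat
  assumes "prob_space \<mu>"
    and "sets \<mu> = sets borel"
    and "\<forall>a. measure \<mu> {a} = 0"
    and "K \<ge> 1"
  shows "\<forall>\<epsilon>>0. (\<lambda>n. measure (smote_space \<mu> n K)
            {(x, i, k, l) \<in> space (smote_space \<mu> n K).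
               \<bar>smote_point x n i k l - x i\<bar> > \<epsilon>}) \<longlonglongrightarrow> 0"
proof (intro allI impI LIMSEQ_I)
  fix \<epsilon> r :: real assume eps: "\<epsilon> > 0" and r: "r > 0"
  obtain M where M: "measure \<mu> {t. M < \<bar>t\<bar>} < r / 2"
    using tight[OF assms(1,2), of "r/2"] r by auto
  define c where "c = real K * real (card {\<lfloor>-M/\<epsilon>\<rfloor>..\<lfloor>M/\<epsilon>\<rfloor>})"
  have c0: "c \<ge> 0" unfolding c_def by simp
  define no where "no = max 1 (nat \<lceil>2 * c / r\<rceil> + 1)"
  show "\<exists>no. \<forall>n\<ge>no. norm (measure (smote_space \<mu> n K)
            {(x, i, k, l) \<in> space (smote_space \<mu> n K).
               \<bar>smote_point x n i k l - x i\<bar> > \<epsilon>} - 0) < r"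
  proof (intro exI allI impI)
    fix n assume n: "no \<le> n"
    hence n1: "n \<ge> 1" unfolding no_def by simp
    have "2 * c / r < real n" using n unfolding no_def by linarith
    hence "2 * c < r * real n" using r by (simp add: field_simps)
    hence cn: "c / real n < r / 2" using n1 by (simp add: field_simps)
    define X where "X = measure (smote_space \<mu> n K)
            {(x, i, k, l) \<in> space (smote_space \<mu> n K).
               \<bar>smote_point x n i k l - x i\<bar> > \<epsilon>}"
    have b: "X \<le> measure \<mu> {t. M < \<bar>t\<bar>} + c / real n"
      unfolding c_def X_def by (rule main_bound[OF assms(1,2,4) eps n1])
    have nn: "0 \<le> X" unfolding X_def by (rule measure_nonneg)
    have "X < r" using b cn M by linarith
    thus "norm (measure (smote_space \<mu> n K)
            {(x, i, k, l) \<in> space (smote_space \<mu> n K).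
               \<bar>smote_point x n i k l - x i\<bar> > \<epsilon>} - 0) < r"
      using nn unfolding X_def by simp
  qed
qed

end
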